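(* Every free pro-$p$ group is strongly commutator-resistant.
   Context: $p$ is a prime; subgroups are closed. $\Phi(H)$ is the Frattini subgroup and $[H,H]$ the closed commutator subgroup. A triple $(G,K,H)$ with $H\le K\le G$ is hierarchical if $x\in G$, $x^p\in H$ imply $x\in K$. A pro-$p$ group $G$ is strongly commutator-resistant if $(H,\Phi(H),[H,H])$ is hierarchical for every subgroup $H$ of $G$. *)

theory Defs
  imports "HOL-Analysis.Analysis" "HOL-Algebra.Generated_Groups" "HOL-Algebra.Coset"
begin

definition topological_group :: "('a, 'b) monoid_scheme \<Rightarrow> 'a topology \<Rightarrow> bool" where
  "topological_group G T \<longleftrightarrow> group G \<and> topspace T = carrier G \<and>
     continuous_map (prod_topology T T) T (\<lambda>(x, y). x \<otimes>\<^bsub>G\<^esub> y) \<and>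
     continuous_map T T (\<lambda>x. inv\<^bsub>G\<^esub> x)"

definition profinite_group :: "('a, 'b) monoid_scheme \<Rightarrow> 'a topology \<Rightarrow> bool" where
  "profinite_group G T \<longleftrightarrow> topological_group G T \<and> compact_space T \<and> Hausdorff_space T \<and>
     (\<forall>W. openin T W \<and> \<one>\<^bsub>G\<^esub> \<in> W \<longrightarrow> (\<exists>N. N \<lhd> G \<and> openin T N \<and> N \<subseteq> W))"

definition pro_p_group :: "nat \<Rightarrow> ('a, 'b) monoid_scheme \<Rightarrow> 'a topology \<Rightarrow> bool" where
  "pro_p_group p G T \<longleftrightarrow> profinite_group G T \<and>
     (\<forall>N. N \<lhd> G \<and> openin T N \<longrightarrow> (\<exists>k. card (rcosets\<^bsub>G\<^esub> N) = p ^ k))"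

text \<open>Finite p-groups (as targets of the universal property; every finite group is
  isomorphic to one with carrier in nat).\<close>
definition finite_p_group :: "nat \<Rightarrow> nat monoid \<Rightarrow> bool" where
  "finite_p_group p K \<longleftrightarrow> group K \<and> finite (carrier K) \<and> (\<exists>k. card (carrier K) = p ^ k)"

text \<open>G is a free pro-p group on the set S with basis map \<iota> (converging to 1),
  in the sense of Ribes--Zalesskii: \<iota> converges to 1, \<iota>(S) topologically generates G,
  and every map from S to a finite p-group converging to 1 (i.e. almost everywhere 1)
  extends to a continuous homomorphism.\<close>
definition free_pro_p_on :: "nat \<Rightarrow> ('a, 'b) monoid_scheme \<Rightarrow> 'a topology \<Rightarrow> 'x set \<Rightarrow> ('x \<Rightarrow> 'a) \<Rightarrow> bool" where
  "free_pro_p_on p G T S \<iota> \<longleftrightarrow> pro_p_group p G T \<and> \<iota> ` S \<subseteq> carrier G \<and>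
     (\<forall>W. openin T W \<and> \<one>\<^bsub>G\<^esub> \<in> W \<longrightarrow> finite {x \<in> S. \<iota> x \<notin> W}) \<and>
     T closure_of (generate G (\<iota> ` S)) = carrier G \<and>
     (\<forall>(K :: nat monoid) f. finite_p_group p K \<and> f ` S \<subseteq> carrier K \<and>
        finite {x \<in> S. f x \<noteq> \<one>\<^bsub>K\<^esub>} \<longrightarrow>
        (\<exists>\<phi> \<in> hom G K. (\<forall>y. openin T {g \<in> carrier G. \<phi> g = y}) \<and> (\<forall>x \<in> S. \<phi> (\<iota> x) = f x)))"

definition free_pro_p_group :: "nat \<Rightarrow> ('a, 'b) monoid_scheme \<Rightarrow> 'a topology \<Rightarrow> bool" where
  "free_pro_p_group p G T \<longleftrightarrow> (\<exists>(S :: 'a set) \<iota>. free_pro_p_on p G T S \<iota>)"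

definition closed_subgroup :: "('a, 'b) monoid_scheme \<Rightarrow> 'a topology \<Rightarrow> 'a set \<Rightarrow> bool" where
  "closed_subgroup G T H \<longleftrightarrow> subgroup H G \<and> closedin T H"

text \<open>Frattini subgroup of a closed subgroup H: intersection of its maximal open
  subgroups (open in the subspace topology); equals H if there are none.\<close>
definition maximal_open_subgroup :: "('a, 'b) monoid_scheme \<Rightarrow> 'a topology \<Rightarrow> 'a set \<Rightarrow> 'a set \<Rightarrow> bool" where
  "maximal_open_subgroup G T H M \<longleftrightarrow> subgroup M G \<and> M \<subset> H \<and> openin (subtopology T H) M \<and>
     (\<forall>L. subgroup L G \<and> M \<subseteq> L \<and> L \<subseteq> H \<longrightarrow> L = M \<or> L = H)"

definition frattini :: "('a, 'b) monoid_scheme \<Rightarrow> 'a topology \<Rightarrow> 'a set \<Rightarrow> 'a set" where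
  "frattini G T H = {x \<in> H. \<forall>M. maximal_open_subgroup G T H M \<longrightarrow> x \<in> M}"

definition closed_commutator :: "('a, 'b) monoid_scheme \<Rightarrow> 'a topology \<Rightarrow> 'a set \<Rightarrow> 'a set" where
  "closed_commutator G T H = T closure_of (derived G H)"

definition hierarchical :: "nat \<Rightarrow> ('a, 'b) monoid_scheme \<Rightarrow> 'a set \<Rightarrow> 'a set \<Rightarrow> 'a set \<Rightarrow> bool" where
  "hierarchical p G A B C \<longleftrightarrow> (\<forall>x \<in> A. x [^]\<^bsub>G\<^esub> p \<in> C \<longrightarrow> x \<in> B)"

definition strongly_commutator_resistant :: "nat \<Rightarrow> ('a, 'b) monoid_scheme \<Rightarrow> 'a topology \<Rightarrow> bool" where
  "strongly_commutator_resistant p G T \<longleftrightarrow>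
     (\<forall>H. closed_subgroup G T H \<longrightarrow>
        hierarchical p G H (frattini G T H) (closed_commutator G T H))"

end

theory Submission
  imports Defs "HOL-Algebra.Group_Action" "HOL-Algebra.Multiplicative_Group"
begin

lemma (in group) inv_cancel_left2 [simp]:
  "x \<in> carrier G \<Longrightarrow> z \<in> carrier G \<Longrightarrow> inv x \<otimes> (x \<otimes> z) = z"
  by (simp add: m_assoc[symmetric])

lemma (in group) inv_cancel_left3 [simp]:
  "x \<in> carrier G \<Longrightarrow> z \<in> carrier G \<Longrightarrow> x \<otimes> (inv x \<otimes> z) = z"
  by (simp add: m_assoc[symmetric])

lemma pgroup_fixed_coset:
  fixes P (structure)
  assumes grp: "group P" and fin: "finite (carrier P)" and cardP: "card (carrier P) = p ^ n"
    and pr: "prime p" and sub: "subgroup M P" and ne: "M \<noteq> carrier P"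
  shows "\<exists>c \<in> rcosets M. c \<noteq> M \<and> (\<forall>m \<in> M. c #> inv m = c)"
proof (rule ccontr)
  interpret group P by (rule grp)
  assume contra: "\<not> ?thesis"
  define X where "X = rcosets M"
  define Mg where "Mg = P\<lparr>carrier := M\<rparr>"
  define \<phi> where "\<phi> = (\<lambda>m. \<lambda>c\<in>X. c #> inv m)"
  have Msub: "M \<subseteq> carrier P" using sub subgroup.subset by blast
  have grpMg: "group Mg" unfolding Mg_def using sub subgroup_imp_group by blast
  have Xsub: "\<And>c. c \<in> X \<Longrightarrow> c \<subseteq> carrier P"
  proof -
    fix c assume "c \<in> X"
    then obtain a where "a \<in> carrier P" "c = M #> a" unfolding X_def RCOSETS_def by blast
    thus "c \<subseteq> carrier P" using Msub r_coset_subset_G by simp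
  qed
  have Xmult: "\<And>c g. c \<in> X \<Longrightarrow> g \<in> carrier P \<Longrightarrow> c #> g \<in> X"
  proof -
    fix c g assume c: "c \<in> X" and g: "g \<in> carrier P"
    then obtain a where a: "a \<in> carrier P" "c = M #> a" unfolding X_def RCOSETS_def by auto
    have "c #> g = M #> (a \<otimes> g)" using a g Msub coset_mult_assoc by simp
    thus "c #> g \<in> X" unfolding X_def using a g Msub rcosetsI by simp
  qed
  have Xassoc: "\<And>c g h. c \<in> X \<Longrightarrow> g \<in> carrier P \<Longrightarrow> h \<in> carrier P \<Longrightarrow> (c #> g) #> h = c #> (g \<otimes> h)"
    using Xsub coset_mult_assoc by blast
  have Xone: "\<And>c. c \<in> X \<Longrightarrow> c #> \<one> = c" using Xsub coset_mult_one by blast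
  have phiBij: "\<phi> m \<in> Bij X" if m: "m \<in> M" for m
  proof -
    have mc: "m \<in> carrier P" using m Msub by blast
    have "bij_betw (\<lambda>c. c #> inv m) X X"
      apply (rule bij_betw_byWitness[where f' = "\<lambda>c. c #> m"])
      using mc Xmult Xassoc Xone by auto
    hence "bij_betw (\<phi> m) X X" unfolding \<phi>_def by (rule bij_betw_cong[THEN iffD1, rotated]) simp
    thus ?thesis unfolding Bij_def \<phi>_def by simp
  qed
  have act: "group_action Mg X \<phi>"
    unfolding group_action_def group_hom_def group_hom_axioms_def
  proof (intro conjI)
    show "group Mg" by (rule grpMg)
    show "group (BijGroup X)" by (rule group_BijGroup)
    show "\<phi> \<in> hom Mg (BijGroup X)"
    proof (rule homI)
      fix m assume "m \<in> carrier Mg" thus "\<phi> m \<in> carrier (BijGroup X)"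
        using phiBij by (simp add: Mg_def BijGroup_def)
    next
      fix m1 m2 assume m1: "m1 \<in> carrier Mg" and m2: "m2 \<in> carrier Mg"
      hence m1': "m1 \<in> M" and m2': "m2 \<in> M" by (simp_all add: Mg_def)
      have c1: "m1 \<in> carrier P" "m2 \<in> carrier P" using m1' m2' Msub by auto
      have "\<phi> (m1 \<otimes>\<^bsub>Mg\<^esub> m2) = compose X (\<phi> m1) (\<phi> m2)"
      proof (rule ext)
        fix c show "\<phi> (m1 \<otimes>\<^bsub>Mg\<^esub> m2) c = compose X (\<phi> m1) (\<phi> m2) c"
          using c1 Xmult Xassoc by (auto simp: \<phi>_def Mg_def compose_def inv_mult_group)
      qed
      thus "\<phi> (m1 \<otimes>\<^bsub>Mg\<^esub> m2) = \<phi> m1 \<otimes>\<^bsub>BijGroup X\<^esub> \<phi> m2"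
        using phiBij m1' m2' by (simp add: BijGroup_def)
    qed
  qed
  interpret A: group_action Mg X \<phi> by (rule act)
  have finX: "finite X" unfolding X_def using fin rcosets_subset_PowG[OF sub]
    by (meson finite_Pow_iff finite_subset)
  have MX: "M \<in> X" unfolding X_def using subgroup.subgroup_in_rcosets[OF sub grp] by simp
  have p1: "p > 1" using pr prime_gt_1_nat by blast
  have lag: "card X * card M = p ^ n" unfolding X_def using lagrange sub cardP order_def by metis
  have cardX_dvd: "p dvd card X"
  proof -
    have "card X dvd p ^ n" using lag by (metis dvd_triv_left)
    then obtain e where e: "card X = p ^ e" using divides_primepow_nat[OF pr] by blast
    have "card X \<noteq> 1"
    proof
      assume "card X = 1"
      then obtain c where "X = {c}" using card_1_singletonE by blast
      hence "X = {M}" using MX by auto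
      hence "carrier P = M" using rcosets_part_G[OF sub] unfolding X_def by simp
      thus False using ne by simp
    qed
    hence "e \<noteq> 0" using e by auto
    thus ?thesis using e by simp
  qed
  have orbM: "orbit Mg \<phi> M = {M}"
  proof -
    have "\<And>g. g \<in> M \<Longrightarrow> M #> inv g = M"
      using sub by (simp add: coset_join2 subgroup.m_inv_closed subgroup.mem_carrier)
    moreover have "\<one> \<in> M" using sub subgroup.one_closed by blast
    ultimately show ?thesis using MX unfolding orbit_def \<phi>_def Mg_def by force
  qed
  have orb_card: "p dvd card Ob" if Ob: "Ob \<in> orbits Mg X \<phi>" "Ob \<noteq> {M}" for Ob
  proof -
    obtain c where c: "c \<in> X" "Ob = orbit Mg \<phi> c" using Ob unfolding orbits_def by blast
    have "card Ob * card (stabilizer Mg \<phi> c) = card M"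
      using A.orbit_stabilizer_theorem[OF c(1)] c by (simp add: order_def Mg_def)
    hence "card Ob dvd p ^ n" using lag by (metis dvd_mult dvd_triv_left)
    then obtain e where e: "card Ob = p ^ e" using divides_primepow_nat[OF pr] by blast
    have cO: "c \<in> Ob" using c A.orbit_refl by blast
    have "card Ob \<noteq> 1"
    proof
      assume "card Ob = 1"
      hence Oc: "Ob = {c}" using cO by (metis card_1_singletonE singletonD)
      have fix_c: "\<forall>m\<in>M. c #> inv m = c"
      proof
        fix m assume m: "m \<in> M"
        have "\<phi> m c \<in> Ob" using c m unfolding orbit_def Mg_def by auto
        thus "c #> inv m = c" using Oc c unfolding \<phi>_def by simp
      qed
      have "c \<noteq> M" using Oc Ob(2) by blast
      thus False using contra fix_c c(1) unfolding X_def by blast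
    qed
    hence "e \<noteq> 0" using e by auto
    thus ?thesis using e by simp
  qed
  have "card X = (\<Sum>Ob\<in>orbits Mg X \<phi>. card Ob)"
  proof -
    have "(\<Sum>Ob\<in>orbits Mg X \<phi>. card Ob) = (\<Sum>Ob\<in>orbits Mg X \<phi>. \<Sum>x\<in>Ob. (1::nat))"
      by (rule sum.cong) auto
    also have "\<dots> = (\<Sum>x\<in>X. 1)" by (rule A.disjoint_sum[OF finX])
    finally show ?thesis by simp
  qed
  also have "\<dots> = card {M} + (\<Sum>Ob\<in>orbits Mg X \<phi> - {{M}}. card Ob)"
  proof -
    have "{M} \<in> orbits Mg X \<phi>" using orbM MX unfolding orbits_def by blast
    moreover have "finite (orbits Mg X \<phi>)" unfolding orbits_def using finX by simp
    ultimately show ?thesis by (simp add: sum.remove)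
  qed
  finally have "card X = 1 + (\<Sum>Ob\<in>orbits Mg X \<phi> - {{M}}. card Ob)" by simp
  moreover have "p dvd (\<Sum>Ob\<in>orbits Mg X \<phi> - {{M}}. card Ob)"
    by (rule dvd_sum) (use orb_card in auto)
  ultimately have "p dvd 1" using cardX_dvd by (metis dvd_add_left_iff)
  thus False using p1 by simp
qed


lemma pgroup_max_normal:
  fixes P (structure)
  assumes grp: "group P" and fin: "finite (carrier P)" and cardP: "card (carrier P) = p ^ n"
    and pr: "prime p" and sub: "subgroup M P" and ne: "M \<noteq> carrier P"
    and max: "\<And>L. subgroup L P \<Longrightarrow> M \<subseteq> L \<Longrightarrow> L = M \<or> L = carrier P"
  shows "M \<lhd> P"
proof -
  interpret group P by (rule grp)
  have Msub: "M \<subseteq> carrier P" using sub subgroup.subset by blast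
  obtain c where c: "c \<in> rcosets M" "c \<noteq> M" "\<forall>m \<in> M. c #> inv m = c"
    using pgroup_fixed_coset[OF grp fin cardP pr sub ne] by blast
  obtain a where a: "a \<in> carrier P" "c = M #> a" using c(1) unfolding RCOSETS_def by blast
  have aM: "a \<notin> M"
  proof
    assume "a \<in> M" hence "M #> a = M" using coset_join2 a sub by blast
    thus False using c a by simp
  qed
  have conj1: "a \<otimes> m \<otimes> inv a \<in> M" if m: "m \<in> M" for m
  proof -
    have mc: "m \<in> carrier P" using m Msub by blast
    have "inv m \<in> M" using subgroup.m_inv_closed[OF sub m] .
    hence "c #> inv (inv m) = c" using c by blast
    hence "M #> (a \<otimes> m) = M #> a" using a mc coset_mult_assoc Msub by simp
    hence "a \<otimes> m \<in> M #> a" using rcos_self[of "a \<otimes> m" M] a mc sub by simp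
    thus ?thesis using subgroup.rcos_module_imp[OF sub grp a(1)] by blast
  qed
  have conj2: "inv a \<otimes> m \<otimes> a \<in> M" if m: "m \<in> M" for m
  proof -
    have sub_img: "(\<lambda>m. a \<otimes> m \<otimes> inv a) ` M \<subseteq> M" using conj1 by blast
    have inj: "inj_on (\<lambda>m. a \<otimes> m \<otimes> inv a) M"
    proof (rule inj_onI)
      fix x y assume x: "x \<in> M" and y: "y \<in> M" and eq: "a \<otimes> x \<otimes> inv a = a \<otimes> y \<otimes> inv a"
      have "x \<in> carrier P" "y \<in> carrier P" using x y Msub by auto
      thus "x = y" using eq a by simp
    qed
    have finM: "finite M" using fin Msub finite_subset by blast
    have "(\<lambda>m. a \<otimes> m \<otimes> inv a) ` M = M"
      using card_subset_eq[OF finM sub_img] card_image[OF inj] by simp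
    then obtain m' where m': "m' \<in> M" "m = a \<otimes> m' \<otimes> inv a" using m by blast
    have "m' \<in> carrier P" using m' Msub by blast
    hence "inv a \<otimes> m \<otimes> a = m'" using m' a by (simp add: m_assoc)
    thus ?thesis using m' by simp
  qed
  define Nz where "Nz = {g \<in> carrier P. \<forall>m\<in>M. g \<otimes> m \<otimes> inv g \<in> M \<and> inv g \<otimes> m \<otimes> g \<in> M}"
  have Nzsub: "subgroup Nz P"
  proof (rule subgroupI)
    show "Nz \<subseteq> carrier P" unfolding Nz_def by blast
    show "Nz \<noteq> {}"
    proof -
      have "\<one> \<in> Nz" unfolding Nz_def using Msub by auto
      thus ?thesis by blast
    qed
    show "inv g \<in> Nz" if g: "g \<in> Nz" for g
      using g unfolding Nz_def by auto
    show "g \<otimes> h \<in> Nz" if g: "g \<in> Nz" and h: "h \<in> Nz" for g h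
    proof -
      have gc: "g \<in> carrier P" and hc: "h \<in> carrier P" using g h unfolding Nz_def by auto
      have "g \<otimes> h \<otimes> m \<otimes> inv (g \<otimes> h) \<in> M \<and> inv (g \<otimes> h) \<otimes> m \<otimes> (g \<otimes> h) \<in> M" if m: "m \<in> M" for m
      proof -
        have mc: "m \<in> carrier P" using m Msub by blast
        have h1: "h \<otimes> m \<otimes> inv h \<in> M" "inv g \<otimes> m \<otimes> g \<in> M" using h g m unfolding Nz_def by auto
        have h2: "g \<otimes> (h \<otimes> m \<otimes> inv h) \<otimes> inv g \<in> M" using g h1(1) unfolding Nz_def by blast
        have h3: "inv h \<otimes> (inv g \<otimes> m \<otimes> g) \<otimes> h \<in> M" using h h1(2) unfolding Nz_def by blast
        have e1: "g \<otimes> h \<otimes> m \<otimes> inv (g \<otimes> h) = g \<otimes> (h \<otimes> m \<otimes> inv h) \<otimes> inv g"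
          using gc hc mc by (simp add: m_assoc inv_mult_group)
        have e2: "inv (g \<otimes> h) \<otimes> m \<otimes> (g \<otimes> h) = inv h \<otimes> (inv g \<otimes> m \<otimes> g) \<otimes> h"
          using gc hc mc by (simp add: m_assoc inv_mult_group)
        show ?thesis using e1 e2 h2 h3 by simp
      qed
      thus ?thesis unfolding Nz_def using gc hc by blast
    qed
  qed
  have MNz: "M \<subseteq> Nz"
  proof
    fix g assume g: "g \<in> M"
    hence gc: "g \<in> carrier P" using Msub by blast
    have "g \<otimes> m \<otimes> inv g \<in> M \<and> inv g \<otimes> m \<otimes> g \<in> M" if m: "m \<in> M" for m
      using g m subgroup.m_closed[OF sub] subgroup.m_inv_closed[OF sub] by simp
    thus "g \<in> Nz" unfolding Nz_def using gc by blast
  qed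
  have aNz: "a \<in> Nz" unfolding Nz_def using a conj1 conj2 by blast
  have "Nz = carrier P" using max[OF Nzsub MNz] aNz aM by blast
  hence "\<forall>x \<in> carrier P. \<forall>h \<in> M. x \<otimes> h \<otimes> inv x \<in> M" unfolding Nz_def by blast
  thus ?thesis using normal_inv_iff sub by blast
qed


lemma pgroup_max_char:
  fixes P (structure)
  assumes grp: "group P" and fin: "finite (carrier P)" and cardP: "card (carrier P) = p ^ n"
    and pr: "prime p" and sub: "subgroup M P"
    and max: "\<And>L. subgroup L P \<Longrightarrow> M \<subseteq> L \<Longrightarrow> L = M \<or> L = carrier P"
    and y: "y \<in> carrier P" and yM: "y \<notin> M"
  shows "\<exists>ch. (\<forall>a\<in>carrier P. ch a < p) \<and>
     (\<forall>a\<in>carrier P. \<forall>b\<in>carrier P. ch (a \<otimes> b) = (ch a + ch b) mod p) \<and> ch y \<noteq> 0"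
proof -
  interpret group P by (rule grp)
  have ne: "M \<noteq> carrier P" using y yM by blast
  have Msub: "M \<subseteq> carrier P" using sub subgroup.subset by blast
  have nrm: "M \<lhd> P" using pgroup_max_normal[OF grp fin cardP pr sub ne max] by blast
  have conj: "\<And>x h. x \<in> carrier P \<Longrightarrow> h \<in> M \<Longrightarrow> x \<otimes> h \<otimes> inv x \<in> M"
    using nrm normal_inv_iff by blast
  have Mm: "\<And>a b. a \<in> M \<Longrightarrow> b \<in> M \<Longrightarrow> a \<otimes> b \<in> M" using subgroup.m_closed[OF sub] by blast
  have Mi: "\<And>a. a \<in> M \<Longrightarrow> inv a \<in> M" using subgroup.m_inv_closed[OF sub] by blast
  have M1: "\<one> \<in> M" using subgroup.one_closed[OF sub] .
  have p1: "p > 1" using pr prime_gt_1_nat by blast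
  define mem where "mem a i \<longleftrightarrow> a \<otimes> inv (y [^] (i::nat)) \<in> M" for a i
  have L1: "mem (a \<otimes> b) (i + k)" if a: "a \<in> carrier P" and b: "b \<in> carrier P"
    and ai: "mem a i" and bk: "mem b k" for a b i k
  proof -
    define u where "u = y [^] i"
    define v where "v = y [^] k"
    have uc: "u \<in> carrier P" "v \<in> carrier P" using y unfolding u_def v_def by auto
    have yik: "y [^] (i + k) = u \<otimes> v" unfolding u_def v_def using y nat_pow_mult by simp
    have e: "a \<otimes> b \<otimes> inv (u \<otimes> v) = (a \<otimes> inv u) \<otimes> (u \<otimes> (b \<otimes> inv v) \<otimes> inv u)"
      using a b uc by (simp add: m_assoc inv_mult_group)
    have "a \<otimes> inv u \<in> M" using ai unfolding mem_def u_def .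
    moreover have "u \<otimes> (b \<otimes> inv v) \<otimes> inv u \<in> M"
      using conj[OF uc(1)] bk unfolding mem_def v_def by blast
    ultimately show ?thesis unfolding mem_def using yik e Mm by simp
  qed
  have Lpow: "y [^] (j * q) \<in> M" if yj: "y [^] j \<in> M" for j q :: nat
  proof -
    have "(y [^] j) [^] q \<in> M"
    proof (induction q)
      case 0 thus ?case using M1 by simp
    next
      case (Suc q) thus ?case using Mm yj by simp
    qed
    thus ?thesis using nat_pow_pow y by simp
  qed
  have Lmod: "mem a r" if a: "a \<in> carrier P" and yj: "y [^] j \<in> M" and h: "mem a (r + j * q)" for a and r j q :: nat
  proof -
    define u where "u = y [^] r"
    define w where "w = y [^] (j * q)"
    have uc: "u \<in> carrier P" "w \<in> carrier P" using y unfolding u_def w_def by auto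
    have yik: "y [^] (r + j * q) = u \<otimes> w" unfolding u_def w_def using y nat_pow_mult by simp
    have e: "a \<otimes> inv u = (a \<otimes> inv (u \<otimes> w)) \<otimes> (u \<otimes> w \<otimes> inv u)"
      using a uc by (simp add: m_assoc inv_mult_group)
    have "w \<in> M" unfolding w_def using Lpow[OF yj] .
    hence "u \<otimes> w \<otimes> inv u \<in> M" using conj uc by blast
    moreover have "a \<otimes> inv (u \<otimes> w) \<in> M" using h yik unfolding mem_def by simp
    ultimately show ?thesis unfolding mem_def u_def[symmetric] using e Mm by simp
  qed
  have ord1: "y [^] order P = \<one>" using pow_order_eq_1 y .
  have ordpos: "order P > 0" using cardP p1 unfolding order_def by simp
  define j where "j = (LEAST j::nat. 0 < j \<and> y [^] j \<in> M)"
  have jex: "0 < order P \<and> y [^] order P \<in> M" using ord1 ordpos M1 by simp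
  have jprop: "0 < j \<and> y [^] j \<in> M" unfolding j_def using jex by (rule LeastI)
  have jleast: "y [^] k \<notin> M" if "0 < k" "k < j" for k :: nat
    using not_less_Least[of k "\<lambda>j::nat. 0 < j \<and> y [^] j \<in> M"] that unfolding j_def by blast
  have Lmod2: "mem a (k mod j)" if a: "a \<in> carrier P" and h: "mem a k" for a k
    using Lmod[OF a conjunct2[OF jprop], of "k mod j" "k div j"] h by (simp add: mod_mult_div_eq)
  have Uniq0: False if a: "a \<in> carrier P" and i: "mem a i" and k: "mem a k" and ik: "i < k" and kj: "k < j" for a i k
  proof -
    define d where "d = k - i"
    define u where "u = y [^] i"
    define v where "v = y [^] d"
    have uc: "u \<in> carrier P" "v \<in> carrier P" using y unfolding u_def v_def by auto
    have yk: "y [^] k = u \<otimes> v" unfolding u_def v_def d_def using y nat_pow_mult ik by simp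
    have m1: "a \<otimes> inv u \<in> M" using i unfolding mem_def u_def .
    have m2: "a \<otimes> inv (u \<otimes> v) \<in> M" using k yk unfolding mem_def by simp
    have "inv (a \<otimes> inv u) \<otimes> (a \<otimes> inv (u \<otimes> v)) \<in> M" using m1 m2 Mm Mi by blast
    moreover have "inv (a \<otimes> inv u) \<otimes> (a \<otimes> inv (u \<otimes> v)) = u \<otimes> inv v \<otimes> inv u"
      using a uc by (simp add: m_assoc inv_mult_group)
    ultimately have "u \<otimes> inv v \<otimes> inv u \<in> M" by simp
    hence "inv u \<otimes> (u \<otimes> inv v \<otimes> inv u) \<otimes> inv (inv u) \<in> M" using conj uc by blast
    moreover have "inv u \<otimes> (u \<otimes> inv v \<otimes> inv u) \<otimes> inv (inv u) = inv v"
      using uc by (simp add: m_assoc)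
    ultimately have "inv v \<in> M" by simp
    hence "v \<in> M" using Mi uc by fastforce
    thus False using jleast[of d] ik kj unfolding v_def d_def by simp
  qed
  have Uniq: "i = k" if a: "a \<in> carrier P" and i: "mem a i" and k: "mem a k" and ij: "i < j" and kj: "k < j" for a i k
    using Uniq0[OF a i k] Uniq0[OF a k i] ij kj by (metis linorder_neqE_nat)
  have jdvd: "p dvd j"
  proof -
    have "mem \<one> (order P)" unfolding mem_def using ord1 M1 by simp
    hence "mem \<one> (order P mod j)" using Lmod2 by simp
    hence "inv (y [^] (order P mod j)) \<in> M" unfolding mem_def using y by simp
    hence "y [^] (order P mod j) \<in> M" using Mi y by fastforce
    hence "order P mod j = 0" using jleast[of "order P mod j"] jprop by (meson mod_less_divisor neq0_conv)
    hence "j dvd p ^ n" using cardP unfolding order_def by (simp add: mod_eq_0_iff_dvd)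
    then obtain e where e: "j = p ^ e" using divides_primepow_nat[OF pr] by blast
    have "j \<noteq> 1"
    proof
      assume "j = 1" hence "y [^] (1::nat) \<in> M" using jprop by simp
      thus False using yM y by simp
    qed
    hence "e \<noteq> 0" using e by auto
    thus ?thesis using e by simp
  qed
  have j1: "1 < j"
  proof -
    have "j \<noteq> 1" using jdvd p1 by auto
    thus ?thesis using jprop by simp
  qed
  define S where "S = {a \<in> carrier P. \<exists>i. mem a i}"
  have Spow: "a [^] q \<in> S" if a: "a \<in> S" for a and q :: nat
  proof (induction q)
    case 0 have "mem \<one> 0" unfolding mem_def using M1 by simp
    thus ?case unfolding S_def by auto
  next
    case (Suc q)
    then obtain i where "mem (a [^] q) i" unfolding S_def by blast
    moreover obtain k where "mem a k" using a unfolding S_def by blast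
    ultimately have "mem (a [^] q \<otimes> a) (i + k)" using L1 a unfolding S_def by auto
    thus ?case unfolding S_def using a S_def by auto
  qed
  have Ssub: "subgroup S P"
  proof (rule subgroupI)
    show "S \<subseteq> carrier P" unfolding S_def by blast
    have "mem \<one> 0" unfolding mem_def using M1 by simp
    thus "S \<noteq> {}" unfolding S_def by blast
    show "inv a \<in> S" if a: "a \<in> S" for a
    proof -
      have ac: "a \<in> carrier P" using a unfolding S_def by blast
      have "a [^] (order P - 1) \<otimes> a = \<one>"
        using ac pow_order_eq_1[OF ac] ordpos by (metis Suc_diff_1 nat_pow_Suc)
      hence "inv a = a [^] (order P - 1)" using ac by (simp add: inv_equality)
      thus ?thesis using Spow a by simp
    qed
    show "a \<otimes> b \<in> S" if a: "a \<in> S" and b: "b \<in> S" for a b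
      using a b L1 unfolding S_def by blast
  qed
  have MS: "M \<subseteq> S"
  proof
    fix x assume x: "x \<in> M"
    hence "mem x 0" unfolding mem_def using Msub by auto
    thus "x \<in> S" unfolding S_def using Msub x by blast
  qed
  have yS: "y \<in> S"
  proof -
    have "mem y 1" unfolding mem_def using y M1 by simp
    thus ?thesis unfolding S_def using y by blast
  qed
  have Sall: "S = carrier P" using max[OF Ssub MS] yS yM by blast
  have ex: "\<exists>i<j. mem a i" if a: "a \<in> carrier P" for a
  proof -
    obtain i where "mem a i" using a Sall unfolding S_def by blast
    thus ?thesis using Lmod2[OF a] jprop by (meson mod_less_divisor)
  qed
  define ch where "ch a = (THE i. i < j \<and> mem a i) mod p" for a
  have chi_eq: "ch a = i mod p" if a: "a \<in> carrier P" and i: "i < j" "mem a i" for a i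
  proof -
    have "(THE i. i < j \<and> mem a i) = i"
      by (rule the_equality) (use i Uniq[OF a] in auto)
    thus ?thesis unfolding ch_def by simp
  qed
  show ?thesis
  proof (intro exI conjI ballI)
    fix a assume "a \<in> carrier P" thus "ch a < p" unfolding ch_def using p1 by simp
  next
    fix a b assume a: "a \<in> carrier P" and b: "b \<in> carrier P"
    obtain i where i: "i < j" "mem a i" using ex[OF a] by blast
    obtain k where k: "k < j" "mem b k" using ex[OF b] by blast
    have ab: "a \<otimes> b \<in> carrier P" using a b by simp
    have "mem (a \<otimes> b) ((i + k) mod j)" using Lmod2[OF ab L1[OF a b i(2) k(2)]] .
    hence "ch (a \<otimes> b) = ((i + k) mod j) mod p" using chi_eq[OF ab] jprop by simp
    also have "\<dots> = (i + k) mod p" using jdvd by (simp add: mod_mod_cancel)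
    also have "\<dots> = (i mod p + k mod p) mod p" by (simp add: mod_add_eq)
    also have "\<dots> = (ch a + ch b) mod p" using chi_eq[OF a i] chi_eq[OF b k] by simp
    finally show "ch (a \<otimes> b) = (ch a + ch b) mod p" .
  next
    have "mem y 1" unfolding mem_def using y M1 by simp
    hence "ch y = 1 mod p" using chi_eq[OF y] j1 by simp
    thus "ch y \<noteq> 0" using p1 by simp
  qed
qed


lemma (in group) inv_cancel_l2 [simp]:
  "x \<in> carrier G \<Longrightarrow> z \<in> carrier G \<Longrightarrow> inv x \<otimes> (x \<otimes> z) = z"
  by (simp add: m_assoc[symmetric])

lemma (in group) inv_cancel_l3 [simp]:
  "x \<in> carrier G \<Longrightarrow> z \<in> carrier G \<Longrightarrow> x \<otimes> (inv x \<otimes> z) = z"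
  by (simp add: m_assoc[symmetric])

definition wr :: "nat \<Rightarrow> ('q, 'z) monoid_scheme \<Rightarrow> 'q set \<Rightarrow> (('q set \<Rightarrow> nat) \<times> 'q) monoid" where
  "wr m Q U = \<lparr>carrier = (rcosets\<^bsub>Q\<^esub> U \<rightarrow>\<^sub>E {..<m}) \<times> carrier Q,
     mult = (\<lambda>x y. (\<lambda>c\<in>rcosets\<^bsub>Q\<^esub> U. (fst x c + fst y (c #>\<^bsub>Q\<^esub> snd x)) mod m, snd x \<otimes>\<^bsub>Q\<^esub> snd y)),
     one = (\<lambda>c\<in>rcosets\<^bsub>Q\<^esub> U. 0, \<one>\<^bsub>Q\<^esub>)\<rparr>"

lemma wr_carrier: "carrier (wr m Q U) = (rcosets\<^bsub>Q\<^esub> U \<rightarrow>\<^sub>E {..<m}) \<times> carrier Q"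
  by (simp add: wr_def)

lemma wr_mult: "x \<otimes>\<^bsub>wr m Q U\<^esub> y = (\<lambda>c\<in>rcosets\<^bsub>Q\<^esub> U. (fst x c + fst y (c #>\<^bsub>Q\<^esub> snd x)) mod m, snd x \<otimes>\<^bsub>Q\<^esub> snd y)"
  by (simp add: wr_def)

lemma wr_one: "\<one>\<^bsub>wr m Q U\<^esub> = (\<lambda>c\<in>rcosets\<^bsub>Q\<^esub> U. 0, \<one>\<^bsub>Q\<^esub>)"
  by (simp add: wr_def)

lemma rcosets_facts:
  fixes Q (structure)
  assumes "group Q" "subgroup U Q"
  shows rcosets_mult_closed: "\<And>c g. c \<in> rcosets U \<Longrightarrow> g \<in> carrier Q \<Longrightarrow> c #> g \<in> rcosets U"
    and rcosets_assoc2: "\<And>c g h. c \<in> rcosets U \<Longrightarrow> g \<in> carrier Q \<Longrightarrow> h \<in> carrier Q \<Longrightarrow> (c #> g) #> h = c #> (g \<otimes> h)"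
    and rcosets_one: "\<And>c. c \<in> rcosets U \<Longrightarrow> c #> \<one> = c"
    and rcosets_sub: "\<And>c. c \<in> rcosets U \<Longrightarrow> c \<subseteq> carrier Q"
    and rcosets_self: "U \<in> rcosets U"
proof -
  interpret group Q by fact
  have Usub: "U \<subseteq> carrier Q" using assms(2) subgroup.subset by blast
  show sub: "\<And>c. c \<in> rcosets U \<Longrightarrow> c \<subseteq> carrier Q"
  proof -
    fix c assume "c \<in> rcosets U"
    then obtain a where "a \<in> carrier Q" "c = U #> a" unfolding RCOSETS_def by blast
    thus "c \<subseteq> carrier Q" using Usub r_coset_subset_G by simp
  qed
  show "\<And>c g. c \<in> rcosets U \<Longrightarrow> g \<in> carrier Q \<Longrightarrow> c #> g \<in> rcosets U"
  proof -
    fix c g assume c: "c \<in> rcosets U" and g: "g \<in> carrier Q"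
    then obtain a where a: "a \<in> carrier Q" "c = U #> a" unfolding RCOSETS_def by auto
    have "c #> g = U #> (a \<otimes> g)" using a g Usub coset_mult_assoc by simp
    thus "c #> g \<in> rcosets U" using a g Usub rcosetsI by simp
  qed
  show "\<And>c g h. c \<in> rcosets U \<Longrightarrow> g \<in> carrier Q \<Longrightarrow> h \<in> carrier Q \<Longrightarrow> (c #> g) #> h = c #> (g \<otimes> h)"
    using sub coset_mult_assoc by blast
  show "\<And>c. c \<in> rcosets U \<Longrightarrow> c #> \<one> = c" using sub coset_mult_one by blast
  show "U \<in> rcosets U" using subgroup.subgroup_in_rcosets[OF assms(2) assms(1)] by simp
qed

lemma wr_group:
  fixes Q (structure)
  assumes grp: "group Q" and sub: "subgroup U Q" and m: "m > 0"
  shows "group (wr m Q U)"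
proof -
  interpret group Q by (rule grp)
  let ?R = "rcosets U"
  note R = rcosets_mult_closed[OF grp sub] rcosets_assoc2[OF grp sub] rcosets_one[OF grp sub]
  show ?thesis
  proof (rule groupI)
    fix x y assume x: "x \<in> carrier (wr m Q U)" and y: "y \<in> carrier (wr m Q U)"
    thus "x \<otimes>\<^bsub>wr m Q U\<^esub> y \<in> carrier (wr m Q U)"
      using m by (auto simp: wr_carrier wr_mult PiE_iff)
  next
    show "\<one>\<^bsub>wr m Q U\<^esub> \<in> carrier (wr m Q U)" using m by (auto simp: wr_carrier wr_one PiE_iff)
  next
    fix x y z assume x: "x \<in> carrier (wr m Q U)" and y: "y \<in> carrier (wr m Q U)" and z: "z \<in> carrier (wr m Q U)"
    have xs: "snd x \<in> carrier Q" and ys: "snd y \<in> carrier Q" and zs: "snd z \<in> carrier Q"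
      using x y z by (auto simp: wr_carrier)
    show "x \<otimes>\<^bsub>wr m Q U\<^esub> y \<otimes>\<^bsub>wr m Q U\<^esub> z = x \<otimes>\<^bsub>wr m Q U\<^esub> (y \<otimes>\<^bsub>wr m Q U\<^esub> z)"
      unfolding wr_mult fst_conv snd_conv
    proof (rule prod_eqI)
      show "snd (\<lambda>c\<in>?R. ((\<lambda>c\<in>?R. (fst x c + fst y (c #> snd x)) mod m) c + fst z (c #> (snd x \<otimes> snd y))) mod m, snd x \<otimes> snd y \<otimes> snd z) =
        snd (\<lambda>c\<in>?R. (fst x c + (\<lambda>c\<in>?R. (fst y c + fst z (c #> snd y)) mod m) (c #> snd x)) mod m, snd x \<otimes> (snd y \<otimes> snd z))"
        using xs ys zs by (simp add: m_assoc)
      show "fst (\<lambda>c\<in>?R. ((\<lambda>c\<in>?R. (fst x c + fst y (c #> snd x)) mod m) c + fst z (c #> (snd x \<otimes> snd y))) mod m, snd x \<otimes> snd y \<otimes> snd z) =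
        fst (\<lambda>c\<in>?R. (fst x c + (\<lambda>c\<in>?R. (fst y c + fst z (c #> snd y)) mod m) (c #> snd x)) mod m, snd x \<otimes> (snd y \<otimes> snd z))"
        unfolding fst_conv
      proof (rule restrict_ext)
        fix c assume c: "c \<in> ?R"
        have c1: "c #> snd x \<in> ?R" using R(1)[OF c xs] .
        have c2: "(c #> snd x) #> snd y = c #> (snd x \<otimes> snd y)" using R(2)[OF c xs ys] .
        show "((\<lambda>c\<in>?R. (fst x c + fst y (c #> snd x)) mod m) c + fst z (c #> (snd x \<otimes> snd y))) mod m =
          (fst x c + (\<lambda>c\<in>?R. (fst y c + fst z (c #> snd y)) mod m) (c #> snd x)) mod m"
          using c c1 c2 by (simp add: mod_add_left_eq mod_add_right_eq add.assoc)
      qed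
    qed
  next
    fix x assume x: "x \<in> carrier (wr m Q U)"
    have xs: "snd x \<in> carrier Q" and xf: "fst x \<in> ?R \<rightarrow>\<^sub>E {..<m}" using x by (auto simp: wr_carrier)
    have "(\<lambda>c\<in>?R. ((\<lambda>c\<in>?R. 0) c + fst x (c #> \<one>)) mod m) = fst x"
    proof -
      have "(\<lambda>c\<in>?R. ((\<lambda>c\<in>?R. 0) c + fst x (c #> \<one>)) mod m) = (\<lambda>c\<in>?R. fst x c)"
        using R(3) xf by (intro restrict_ext) (auto simp: PiE_iff)
      thus ?thesis using xf by simp
    qed
    thus "\<one>\<^bsub>wr m Q U\<^esub> \<otimes>\<^bsub>wr m Q U\<^esub> x = x" using xs by (simp add: wr_mult wr_one)
  next
    fix x assume x: "x \<in> carrier (wr m Q U)"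
    have xs: "snd x \<in> carrier Q" and xf: "fst x \<in> ?R \<rightarrow>\<^sub>E {..<m}" using x by (auto simp: wr_carrier)
    define y where "y = (\<lambda>c\<in>?R. (m - fst x (c #> inv (snd x))) mod m, inv (snd x))"
    have yc: "y \<in> carrier (wr m Q U)" unfolding y_def using xs m by (auto simp: wr_carrier PiE_iff)
    have "(\<lambda>c\<in>?R. (fst y c + fst x (c #> snd y)) mod m) = (\<lambda>c\<in>?R. 0)"
    proof (rule restrict_ext)
      fix c assume c: "c \<in> ?R"
      have "c #> inv (snd x) \<in> ?R" using R(1)[OF c] xs by simp
      hence lt: "fst x (c #> inv (snd x)) < m" using xf by (auto simp: PiE_iff)
      show "(fst y c + fst x (c #> snd y)) mod m = 0"
        unfolding y_def using c lt by (simp add: mod_add_left_eq)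
    qed
    hence "y \<otimes>\<^bsub>wr m Q U\<^esub> x = \<one>\<^bsub>wr m Q U\<^esub>" using xs unfolding y_def by (simp add: wr_mult wr_one)
    thus "\<exists>y \<in> carrier (wr m Q U). y \<otimes>\<^bsub>wr m Q U\<^esub> x = \<one>\<^bsub>wr m Q U\<^esub>" using yc by blast
  qed
qed


lemma wr_card:
  fixes Q (structure)
  assumes grp: "group Q" and sub: "subgroup U Q" and fin: "finite (carrier Q)"
  shows "card (carrier (wr m Q U)) = m ^ card (rcosets U) * card (carrier Q)"
    and "finite (carrier (wr m Q U))"
proof -
  interpret group Q by (rule grp)
  have finR: "finite (rcosets U)" using fin rcosets_subset_PowG[OF sub]
    by (meson finite_Pow_iff finite_subset)
  show "card (carrier (wr m Q U)) = m ^ card (rcosets U) * card (carrier Q)"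
    unfolding wr_carrier using finR by (simp add: card_cartesian_product card_PiE)
  show "finite (carrier (wr m Q U))"
    unfolding wr_carrier using finR fin by (simp add: finite_PiE)
qed

definition wred :: "nat \<Rightarrow> ('q, 'z) monoid_scheme \<Rightarrow> 'q set \<Rightarrow> ('q set \<Rightarrow> nat) \<times> 'q \<Rightarrow> ('q set \<Rightarrow> nat) \<times> 'q" where
  "wred p Q U x = (\<lambda>c\<in>rcosets\<^bsub>Q\<^esub> U. fst x c mod p, snd x)"

lemma wred_hom:
  fixes Q (structure)
  assumes grp: "group Q" and sub: "subgroup U Q" and p: "p > 0"
  shows "wred p Q U \<in> hom (wr (p * p) Q U) (wr p Q U)"
proof (rule homI)
  interpret group Q by (rule grp)
  note R = rcosets_mult_closed[OF grp sub]
  fix x assume "x \<in> carrier (wr (p * p) Q U)"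
  thus "wred p Q U x \<in> carrier (wr p Q U)" using p by (auto simp: wr_carrier wred_def PiE_iff)
next
  interpret group Q by (rule grp)
  note R = rcosets_mult_closed[OF grp sub]
  fix x y assume x: "x \<in> carrier (wr (p * p) Q U)" and y: "y \<in> carrier (wr (p * p) Q U)"
  have xs: "snd x \<in> carrier Q" using x by (auto simp: wr_carrier)
  show "wred p Q U (x \<otimes>\<^bsub>wr (p * p) Q U\<^esub> y) = wred p Q U x \<otimes>\<^bsub>wr p Q U\<^esub> wred p Q U y"
    unfolding wred_def wr_mult fst_conv snd_conv
  proof (rule prod_eqI)
    show "fst (\<lambda>c\<in>rcosets U. (\<lambda>c\<in>rcosets U. (fst x c + fst y (c #> snd x)) mod (p * p)) c mod p, snd x \<otimes> snd y) =
      fst (\<lambda>c\<in>rcosets U. ((\<lambda>c\<in>rcosets U. fst x c mod p) c + (\<lambda>c\<in>rcosets U. fst y c mod p) (c #> snd x)) mod p, snd x \<otimes> snd y)"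
      unfolding fst_conv
    proof (rule restrict_ext)
      fix c assume c: "c \<in> rcosets U"
      have c1: "c #> snd x \<in> rcosets U" using R[OF c xs] .
      have "(fst x c + fst y (c #> snd x)) mod (p * p) mod p = (fst x c + fst y (c #> snd x)) mod p"
        by (simp add: mod_mod_cancel)
      thus "(\<lambda>c\<in>rcosets U. (fst x c + fst y (c #> snd x)) mod (p * p)) c mod p =
        ((\<lambda>c\<in>rcosets U. fst x c mod p) c + (\<lambda>c\<in>rcosets U. fst y c mod p) (c #> snd x)) mod p"
        using c c1 by (simp add: mod_add_eq)
    qed
  qed simp
qed

lemma wred_surj:
  assumes "y \<in> carrier (wr p Q U)"
  shows "y \<in> carrier (wr (p * p) Q U) \<and> wred p Q U y = y"
proof -
  have yf: "fst y \<in> rcosets\<^bsub>Q\<^esub> U \<rightarrow>\<^sub>E {..<p}" and ys: "snd y \<in> carrier Q"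
    using assms by (auto simp: wr_carrier)
  have "fst y \<in> rcosets\<^bsub>Q\<^esub> U \<rightarrow>\<^sub>E {..<p * p}" using yf
    by (auto simp: PiE_iff) (metis lessThan_iff less_le_trans mult_le_mono1 mult_1 not_less_zero One_nat_def Suc_leI zero_less_iff_neq_zero)
  moreover have "(\<lambda>c\<in>rcosets\<^bsub>Q\<^esub> U. fst y c mod p) = fst y"
  proof -
    have "(\<lambda>c\<in>rcosets\<^bsub>Q\<^esub> U. fst y c mod p) = (\<lambda>c\<in>rcosets\<^bsub>Q\<^esub> U. fst y c)"
      using yf by (intro restrict_ext) (auto simp: PiE_iff)
    thus ?thesis using yf by simp
  qed
  ultimately show ?thesis using ys unfolding wr_carrier wred_def by (simp add: mem_Times_iff)
qed

definition wtr :: "('q, 'z) monoid_scheme \<Rightarrow> 'q set \<Rightarrow> 'q set \<Rightarrow> 'q" where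
  "wtr Q U c = (if c = U then \<one>\<^bsub>Q\<^esub> else (SOME a. a \<in> c))"

definition wTheta :: "('q, 'z) monoid_scheme \<Rightarrow> 'q set \<Rightarrow> ('q \<Rightarrow> nat) \<Rightarrow> 'q \<Rightarrow> ('q set \<Rightarrow> nat) \<times> 'q" where
  "wTheta Q U ch q = (\<lambda>c\<in>rcosets\<^bsub>Q\<^esub> U. ch (wtr Q U c \<otimes>\<^bsub>Q\<^esub> q \<otimes>\<^bsub>Q\<^esub> inv\<^bsub>Q\<^esub> (wtr Q U (c #>\<^bsub>Q\<^esub> q))), q)"

lemma wtr_props:
  fixes Q (structure)
  assumes grp: "group Q" and sub: "subgroup U Q" and c: "c \<in> rcosets U"
  shows "wtr Q U c \<in> carrier Q \<and> U #> wtr Q U c = c"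
proof -
  interpret group Q by (rule grp)
  have Usub: "U \<subseteq> carrier Q" using sub subgroup.subset by blast
  obtain a where a: "a \<in> carrier Q" "c = U #> a" using c unfolding RCOSETS_def by blast
  show ?thesis
  proof (cases "c = U")
    case True thus ?thesis unfolding wtr_def using Usub by simp
  next
    case False
    have "a \<in> c" using a rcos_self sub by blast
    hence t: "wtr Q U c \<in> c" unfolding wtr_def using False by (metis someI_ex)
    have "wtr Q U c \<in> carrier Q" using t rcosets_sub[OF grp sub c] by blast
    moreover have "U #> wtr Q U c = c" using repr_independence[of "wtr Q U c" U a] t a sub by simp
    ultimately show ?thesis by simp
  qed
qed

lemma wtr_U:
  fixes Q (structure)
  assumes grp: "group Q" and sub: "subgroup U Q" and c: "c \<in> rcosets U" and q: "q \<in> carrier Q"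
  shows "wtr Q U c \<otimes> q \<otimes> inv (wtr Q U (c #> q)) \<in> U"
proof -
  interpret group Q by (rule grp)
  have Usub: "U \<subseteq> carrier Q" using sub subgroup.subset by blast
  have cq: "c #> q \<in> rcosets U" using rcosets_mult_closed[OF grp sub c q] .
  note t1 = wtr_props[OF grp sub c] and t2 = wtr_props[OF grp sub cq]
  have "U #> (wtr Q U c \<otimes> q) = c #> q" using t1 q Usub coset_mult_assoc[of U "wtr Q U c" q] by simp
  also have "\<dots> = U #> wtr Q U (c #> q)" using t2 by simp
  finally have "wtr Q U c \<otimes> q \<in> U #> wtr Q U (c #> q)" using rcos_self[of "wtr Q U c \<otimes> q" U] t1 q sub by simp
  thus ?thesis using subgroup.rcos_module_imp[OF sub grp] t2 by blast
qed

lemma wTheta_hom: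
  fixes Q (structure)
  assumes grp: "group Q" and sub: "subgroup U Q" and p: "p > 0"
    and chlt: "\<forall>a\<in>U. ch a < p" and chhom: "\<forall>a\<in>U. \<forall>b\<in>U. ch (a \<otimes> b) = (ch a + ch b) mod p"
  shows "wTheta Q U ch \<in> hom Q (wr p Q U)"
proof (rule homI)
  interpret group Q by (rule grp)
  fix q assume q: "q \<in> carrier Q"
  show "wTheta Q U ch q \<in> carrier (wr p Q U)"
    unfolding wTheta_def wr_carrier using q chlt wtr_U[OF grp sub _ q] by (auto simp: PiE_iff)
next
  interpret group Q by (rule grp)
  fix q q' assume q: "q \<in> carrier Q" and q': "q' \<in> carrier Q"
  show "wTheta Q U ch (q \<otimes> q') = wTheta Q U ch q \<otimes>\<^bsub>wr p Q U\<^esub> wTheta Q U ch q'"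
    unfolding wTheta_def wr_mult fst_conv snd_conv
  proof (rule prod_eqI)
    show "fst (\<lambda>c\<in>rcosets U. ch (wtr Q U c \<otimes> (q \<otimes> q') \<otimes> inv wtr Q U (c #> (q \<otimes> q'))), q \<otimes> q') =
      fst (\<lambda>c\<in>rcosets U. ((\<lambda>c\<in>rcosets U. ch (wtr Q U c \<otimes> q \<otimes> inv wtr Q U (c #> q))) c +
               (\<lambda>c\<in>rcosets U. ch (wtr Q U c \<otimes> q' \<otimes> inv wtr Q U (c #> q'))) (c #> q)) mod p, q \<otimes> q')"
      unfolding fst_conv
    proof (rule restrict_ext)
      fix c assume c: "c \<in> rcosets U"
      have cq: "c #> q \<in> rcosets U" using rcosets_mult_closed[OF grp sub c q] .
      have cqq: "(c #> q) #> q' = c #> (q \<otimes> q')" using rcosets_assoc2[OF grp sub c q q'] .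
      define a where "a = wtr Q U c \<otimes> q \<otimes> inv wtr Q U (c #> q)"
      define b where "b = wtr Q U (c #> q) \<otimes> q' \<otimes> inv wtr Q U ((c #> q) #> q')"
      have aU: "a \<in> U" unfolding a_def using wtr_U[OF grp sub c q] .
      have bU: "b \<in> U" unfolding b_def using wtr_U[OF grp sub cq q'] .
      have t1: "wtr Q U c \<in> carrier Q" using wtr_props[OF grp sub c] by blast
      have t2: "wtr Q U (c #> q) \<in> carrier Q" using wtr_props[OF grp sub cq] by blast
      have t3: "wtr Q U (c #> (q \<otimes> q')) \<in> carrier Q"
        using wtr_props[OF grp sub rcosets_mult_closed[OF grp sub c m_closed[OF q q']]] by blast
      have "a \<otimes> b = wtr Q U c \<otimes> (q \<otimes> q') \<otimes> inv wtr Q U (c #> (q \<otimes> q'))"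
        unfolding a_def b_def cqq using t1 t2 t3 q q' by (simp add: m_assoc)
      hence "ch (wtr Q U c \<otimes> (q \<otimes> q') \<otimes> inv wtr Q U (c #> (q \<otimes> q'))) = (ch a + ch b) mod p"
        using chhom aU bU by metis
      thus "ch (wtr Q U c \<otimes> (q \<otimes> q') \<otimes> inv wtr Q U (c #> (q \<otimes> q'))) =
        ((\<lambda>c\<in>rcosets U. ch (wtr Q U c \<otimes> q \<otimes> inv wtr Q U (c #> q))) c +
         (\<lambda>c\<in>rcosets U. ch (wtr Q U c \<otimes> q' \<otimes> inv wtr Q U (c #> q'))) (c #> q)) mod p"
        using c cq cqq unfolding a_def b_def by simp
    qed
  qed simp
qed

lemma wTheta_base:
  fixes Q (structure)
  assumes grp: "group Q" and sub: "subgroup U Q" and u: "u \<in> U"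
  shows "fst (wTheta Q U ch u) U = ch u"
proof -
  interpret group Q by (rule grp)
  have uc: "u \<in> carrier Q" using u sub subgroup.subset by blast
  have "U #> u = U" using coset_join2[OF uc sub u] .
  thus ?thesis unfolding wTheta_def using rcosets_self[OF grp sub] uc by (simp add: wtr_def)
qed

lemma wr_base_mult:
  fixes Q (structure)
  assumes grp: "group Q" and sub: "subgroup U Q"
    and x: "x \<in> carrier (wr m Q U)" and xU: "snd x \<in> U"
  shows "fst (x \<otimes>\<^bsub>wr m Q U\<^esub> y) U = (fst x U + fst y U) mod m"
proof -
  interpret group Q by (rule grp)
  have uc: "snd x \<in> carrier Q" using xU sub subgroup.subset by blast
  have "U #> snd x = U" using coset_join2[OF uc sub xU] .
  thus ?thesis using rcosets_self[OF grp sub] by (simp add: wr_mult)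
qed


lemma fiber_pred_open:
  assumes "\<forall>y. openin T {g \<in> A. f g = y}"
  shows "openin T {g \<in> A. P (f g)}"
proof -
  have "{g \<in> A. P (f g)} = \<Union> ((\<lambda>y. {g \<in> A. f g = y}) ` {y. P y})" by auto
  thus ?thesis using assms by (auto intro!: openin_Union)
qed

lemma fiber_eq_closed:
  assumes A: "A = topspace T"
    and f: "\<forall>y. openin T {g \<in> A. f g = y}" and g: "\<forall>y. openin T {x \<in> A. g x = y}"
  shows "closedin T {x \<in> A. f x = g x}"
proof -
  have "topspace T - {x \<in> A. f x = g x} = \<Union> ((\<lambda>x0. {x \<in> A. f x = f x0} \<inter> {x \<in> A. g x = g x0}) ` {x0 \<in> A. f x0 \<noteq> g x0})"
    using A by auto
  moreover have "openin T (\<Union> ((\<lambda>x0. {x \<in> A. f x = f x0} \<inter> {x \<in> A. g x = g x0}) ` {x0 \<in> A. f x0 \<noteq> g x0}))"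
    using f g by (intro openin_Union) auto
  ultimately show ?thesis unfolding closedin_def using A by auto
qed

lemma fiber_pred_closed:
  assumes A: "A = topspace T" and f: "\<forall>y. openin T {g \<in> A. f g = y}"
  shows "closedin T {g \<in> A. P (f g)}"
proof -
  have "topspace T - {g \<in> A. P (f g)} = {g \<in> A. \<not> P (f g)}" using A by auto
  moreover have "openin T {g \<in> A. \<not> P (f g)}" using fiber_pred_open[OF f] .
  ultimately show ?thesis unfolding closedin_def using A by auto
qed

lemma open_rcoset:
  fixes G (structure)
  assumes tg: "topological_group G T" and N: "openin T N" and Nsub: "N \<subseteq> carrier G" and g: "g \<in> carrier G"
  shows "openin T (N #> g)"
proof -
  have grp: "group G" and top: "topspace T = carrier G"
    and mc: "continuous_map (prod_topology T T) T (\<lambda>(x, y). x \<otimes> y)"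
    using tg unfolding topological_group_def by auto
  interpret group G by (rule grp)
  have ig: "inv g \<in> topspace T" using g top by simp
  have c1: "continuous_map T (prod_topology T T) (\<lambda>x. (x, inv g))"
    by (rule continuous_map_pairedI) (use ig in auto)
  have "continuous_map T T ((\<lambda>(x, y). x \<otimes> y) \<circ> (\<lambda>x. (x, inv g)))"
    using continuous_map_compose[OF c1 mc] .
  hence c: "continuous_map T T (\<lambda>x. x \<otimes> inv g)" by (simp add: o_def)
  have "N #> g = {x \<in> topspace T. x \<otimes> inv g \<in> N}"
  proof
    show "N #> g \<subseteq> {x \<in> topspace T. x \<otimes> inv g \<in> N}"
    proof
      fix x assume "x \<in> N #> g"
      then obtain n where n: "n \<in> N" "x = n \<otimes> g" unfolding r_coset_def by auto
      have nc: "n \<in> carrier G" using n Nsub by blast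
      have "x \<otimes> inv g = n" using n nc g by (simp add: m_assoc)
      thus "x \<in> {x \<in> topspace T. x \<otimes> inv g \<in> N}" using n nc g top by auto
    qed
  next
    show "{x \<in> topspace T. x \<otimes> inv g \<in> N} \<subseteq> N #> g"
    proof
      fix x assume x: "x \<in> {x \<in> topspace T. x \<otimes> inv g \<in> N}"
      hence xc: "x \<in> carrier G" using top by simp
      have "x = (x \<otimes> inv g) \<otimes> g" using xc g by (simp add: m_assoc)
      thus "x \<in> N #> g" using x unfolding r_coset_def by blast
    qed
  qed
  thus ?thesis using openin_continuous_map_preimage[OF c N] by simp
qed

lemma coset_fun_open:
  fixes G (structure)
  assumes tg: "topological_group G T" and N: "openin T N" and sub: "subgroup N G"
  shows "openin T {g \<in> carrier G. F (N #> g) = y}"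
proof -
  have grp: "group G" using tg unfolding topological_group_def by auto
  interpret group G by (rule grp)
  have Nsub: "N \<subseteq> carrier G" using sub subgroup.subset by blast
  have "{g \<in> carrier G. F (N #> g) = y} = \<Union> ((\<lambda>g0. N #> g0) ` {g \<in> carrier G. F (N #> g) = y})"
  proof
    show "{g \<in> carrier G. F (N #> g) = y} \<subseteq> \<Union> ((\<lambda>g0. N #> g0) ` {g \<in> carrier G. F (N #> g) = y})"
      using rcos_self[OF _ sub] by blast
  next
    show "\<Union> ((\<lambda>g0. N #> g0) ` {g \<in> carrier G. F (N #> g) = y}) \<subseteq> {g \<in> carrier G. F (N #> g) = y}"
    proof
      fix x assume "x \<in> \<Union> ((\<lambda>g0. N #> g0) ` {g \<in> carrier G. F (N #> g) = y})"
      then obtain g0 where g0: "g0 \<in> carrier G" "F (N #> g0) = y" "x \<in> N #> g0" by blast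
      have xc: "x \<in> carrier G" using g0 Nsub r_coset_subset_G by blast
      have "N #> g0 = N #> x" using repr_independence[OF g0(3) g0(1) sub] .
      thus "x \<in> {g \<in> carrier G. F (N #> g) = y}" using g0 xc by simp
    qed
  qed
  moreover have "openin T (\<Union> ((\<lambda>g0. N #> g0) ` {g \<in> carrier G. F (N #> g) = y}))"
    using open_rcoset[OF tg N Nsub] by (intro openin_Union) auto
  ultimately show ?thesis by simp
qed

lemma finite_group_to_nat:
  assumes grp: "group E" and fin: "finite (carrier E)"
  shows "\<exists>(K::nat monoid) h. group K \<and> card (carrier K) = card (carrier E) \<and> h \<in> iso E K"
proof -
  obtain g where g: "bij_betw g (carrier E) {0..<card (carrier E)}"
    using ex_bij_betw_finite_nat[OF fin] by blast
  have inj: "inj_on g (carrier E)" using g bij_betw_def by blast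
  define gi where "gi = inv_into (carrier E) g"
  define K where "K = \<lparr>carrier = g ` carrier E, mult = (\<lambda>a b. g (gi a \<otimes>\<^bsub>E\<^esub> gi b)), one = g \<one>\<^bsub>E\<^esub>\<rparr>"
  interpret group E by (rule grp)
  have gi: "\<And>x. x \<in> carrier E \<Longrightarrow> gi (g x) = x" unfolding gi_def using inj by simp
  have iso: "g \<in> iso E K"
    unfolding iso_def
  proof (intro CollectI conjI)
    show "g \<in> hom E K"
      by (rule homI) (simp_all add: K_def gi)
    show "bij_betw g (carrier E) (carrier K)" unfolding K_def using inj by (simp add: inj_on_imp_bij_betw)
  qed
  have "group (K\<lparr>one := g \<one>\<^bsub>E\<^esub>\<rparr>)" using iso_imp_img_group[OF iso] .
  moreover have "K\<lparr>one := g \<one>\<^bsub>E\<^esub>\<rparr> = K" unfolding K_def by simp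
  ultimately have "group K" by simp
  moreover have "card (carrier K) = card (carrier E)" unfolding K_def using card_image[OF inj] by simp
  ultimately show ?thesis using iso by blast
qed

lemma hom_equalizer_subgroup:
  assumes G: "group G" and H: "group H" and f: "f \<in> hom G H" and g: "g \<in> hom G H"
  shows "subgroup {x \<in> carrier G. f x = g x} G"
proof -
  interpret f: group_hom G H f using G H f by (simp add: group_hom_def group_hom_axioms_def)
  interpret g: group_hom G H g using G H g by (simp add: group_hom_def group_hom_axioms_def)
  show ?thesis
  proof (rule f.G.subgroupI)
    show "{x \<in> carrier G. f x = g x} \<subseteq> carrier G" by blast
    show "{x \<in> carrier G. f x = g x} \<noteq> {}" using f.hom_one g.hom_one by force
    show "inv\<^bsub>G\<^esub> a \<in> {x \<in> carrier G. f x = g x}" if "a \<in> {x \<in> carrier G. f x = g x}" for a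
      using that f.hom_inv g.hom_inv by auto
    show "a \<otimes>\<^bsub>G\<^esub> b \<in> {x \<in> carrier G. f x = g x}"
      if "a \<in> {x \<in> carrier G. f x = g x}" "b \<in> {x \<in> carrier G. f x = g x}" for a b
      using that f.hom_mult g.hom_mult by auto
  qed
qed


lemma free_lift:
  fixes G :: "('a, 'b) monoid_scheme" and E :: "('e, 'c) monoid_scheme" and Eb :: "('f, 'd) monoid_scheme"
  assumes free: "free_pro_p_on p G T S \<iota>" and pr: "prime p"
    and grpE: "group E" and finE: "finite (carrier E)" and cardE: "card (carrier E) = p ^ k"
    and grpEb: "group Eb" and red: "red \<in> hom E Eb" and surj: "\<forall>y\<in>carrier Eb. \<exists>x\<in>carrier E. red x = y"
    and th: "th \<in> hom G Eb" and thopen: "\<forall>y. openin T {g \<in> carrier G. th g = y}"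
  shows "\<exists>\<Theta> \<in> hom G E. (\<forall>y. openin T {g \<in> carrier G. \<Theta> g = y}) \<and> (\<forall>g\<in>carrier G. red (\<Theta> g) = th g)"
proof -
  have pp: "pro_p_group p G T" and iS: "\<iota> ` S \<subseteq> carrier G"
    and conv: "\<forall>W. openin T W \<and> \<one>\<^bsub>G\<^esub> \<in> W \<longrightarrow> finite {x \<in> S. \<iota> x \<notin> W}"
    and dense: "T closure_of (generate G (\<iota> ` S)) = carrier G"
    and univ: "\<forall>(K :: nat monoid) f. finite_p_group p K \<and> f ` S \<subseteq> carrier K \<and>
        finite {x \<in> S. f x \<noteq> \<one>\<^bsub>K\<^esub>} \<longrightarrow>
        (\<exists>\<phi> \<in> hom G K. (\<forall>y. openin T {g \<in> carrier G. \<phi> g = y}) \<and> (\<forall>x \<in> S. \<phi> (\<iota> x) = f x))"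
    using free unfolding free_pro_p_on_def by blast+
  have tg: "topological_group G T" using pp unfolding pro_p_group_def profinite_group_def by blast
  have grpG: "group G" and top: "topspace T = carrier G" using tg unfolding topological_group_def by auto
  obtain K :: "nat monoid" and h where K: "group K" "card (carrier K) = card (carrier E)" "h \<in> iso E K"
    using finite_group_to_nat[OF grpE finE] by blast
  have p0: "p > 0" using pr prime_gt_0_nat by blast
  have fpK: "finite_p_group p K"
  proof -
    have "card (carrier K) > 0" using K(2) cardE p0 by simp
    hence "finite (carrier K)" using card_gt_0_iff by blast
    thus ?thesis unfolding finite_p_group_def using K cardE by auto
  qed
  have hhom: "h \<in> hom E K" and hbij: "bij_betw h (carrier E) (carrier K)" using K(3) unfolding iso_def by auto
  interpret hE: group_hom E K h using grpE K(1) hhom by (simp add: group_hom_def group_hom_axioms_def)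
  interpret rE: group_hom E Eb red using grpE grpEb red by (simp add: group_hom_def group_hom_axioms_def)
  interpret tG: group_hom G Eb th using grpG grpEb th by (simp add: group_hom_def group_hom_axioms_def)
  define l where "l y = (if y = \<one>\<^bsub>Eb\<^esub> then \<one>\<^bsub>E\<^esub> else (SOME x. x \<in> carrier E \<and> red x = y))" for y
  have lprop: "l y \<in> carrier E \<and> red (l y) = y" if y: "y \<in> carrier Eb" for y
  proof (cases "y = \<one>\<^bsub>Eb\<^esub>")
    case True thus ?thesis unfolding l_def by simp
  next
    case False
    have "\<exists>x. x \<in> carrier E \<and> red x = y" using surj y by blast
    hence "(SOME x. x \<in> carrier E \<and> red x = y) \<in> carrier E \<and> red (SOME x. x \<in> carrier E \<and> red x = y) = y"
      by (rule someI_ex)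
    thus ?thesis unfolding l_def using False by simp
  qed
  define f where "f s = h (l (th (\<iota> s)))" for s
  have fS: "f ` S \<subseteq> carrier K"
  proof
    fix z assume "z \<in> f ` S"
    then obtain s where s: "s \<in> S" "z = f s" by blast
    have "\<iota> s \<in> carrier G" using s iS by blast
    hence "th (\<iota> s) \<in> carrier Eb" by simp
    thus "z \<in> carrier K" unfolding s f_def using lprop by simp
  qed
  have ffin: "finite {x \<in> S. f x \<noteq> \<one>\<^bsub>K\<^esub>}"
  proof -
    define W where "W = {g \<in> carrier G. th g = \<one>\<^bsub>Eb\<^esub>}"
    have "openin T W" unfolding W_def using thopen by blast
    moreover have "\<one>\<^bsub>G\<^esub> \<in> W" unfolding W_def by simp
    ultimately have "finite {x \<in> S. \<iota> x \<notin> W}" using conv by blast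
    moreover have "{x \<in> S. f x \<noteq> \<one>\<^bsub>K\<^esub>} \<subseteq> {x \<in> S. \<iota> x \<notin> W}"
      unfolding W_def f_def l_def using iS by auto
    ultimately show ?thesis using finite_subset by blast
  qed
  obtain \<phi> where \<phi>: "\<phi> \<in> hom G K" and \<phi>open: "\<forall>y. openin T {g \<in> carrier G. \<phi> g = y}"
    and \<phi>\<iota>: "\<forall>x \<in> S. \<phi> (\<iota> x) = f x"
    using univ fpK fS ffin by blast
  define gi where "gi = inv_into (carrier E) h"
  have giiso: "gi \<in> iso K E" unfolding gi_def using group.iso_set_sym[OF grpE K(3)] .
  have gihom: "gi \<in> hom K E" using giiso unfolding iso_def by blast
  interpret gK: group_hom K E gi using grpE K(1) gihom by (simp add: group_hom_def group_hom_axioms_def)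
  interpret pG: group_hom G K \<phi> using grpG K(1) \<phi> by (simp add: group_hom_def group_hom_axioms_def)
  define \<Theta> where "\<Theta> g = gi (\<phi> g)" for g
  have \<Theta>hom: "\<Theta> \<in> hom G E"
    by (rule homI) (simp_all add: \<Theta>_def)
  have \<Theta>open: "\<forall>y. openin T {g \<in> carrier G. \<Theta> g = y}"
  proof
    fix y show "openin T {g \<in> carrier G. \<Theta> g = y}"
      unfolding \<Theta>_def using fiber_pred_open[OF \<phi>open, of "\<lambda>z. gi z = y"] by simp
  qed
  have rT: "(\<lambda>x. red (\<Theta> x)) \<in> hom G Eb"
    by (rule homI) (simp_all add: \<Theta>_def)
  define Eq where "Eq = {x \<in> carrier G. red (\<Theta> x) = th x}"
  have Eqsub: "subgroup Eq G" unfolding Eq_def using hom_equalizer_subgroup[OF grpG grpEb rT th] .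
  have inj: "inj_on h (carrier E)" using hbij bij_betw_def by blast
  have iSEq: "\<iota> ` S \<subseteq> Eq"
  proof
    fix z assume "z \<in> \<iota> ` S"
    then obtain s where s: "s \<in> S" "z = \<iota> s" by blast
    have zc: "z \<in> carrier G" using s iS by blast
    hence tz: "th z \<in> carrier Eb" by simp
    have "\<Theta> z = l (th z)" unfolding \<Theta>_def gi_def using \<phi>\<iota> s lprop[OF tz] inj
      by (simp add: f_def)
    thus "z \<in> Eq" unfolding Eq_def using zc lprop[OF tz] by simp
  qed
  have genEq: "generate G (\<iota> ` S) \<subseteq> Eq" using group.generate_subgroup_incl[OF grpG iSEq Eqsub] .
  have "closedin T Eq"
  proof -
    have "\<forall>y. openin T {g \<in> carrier G. red (\<Theta> g) = y}"
    proof
      fix y show "openin T {g \<in> carrier G. red (\<Theta> g) = y}"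
        unfolding \<Theta>_def using fiber_pred_open[OF \<phi>open, of "\<lambda>z. red (gi z) = y"] by simp
    qed
    thus ?thesis unfolding Eq_def by (rule fiber_eq_closed[OF top[symmetric] _ thopen])
  qed
  hence "T closure_of (generate G (\<iota> ` S)) \<subseteq> Eq" using closure_of_minimal[OF genEq] by blast
  hence "carrier G \<subseteq> Eq" using dense by simp
  thus ?thesis using \<Theta>hom \<Theta>open unfolding Eq_def by blast
qed


lemma mod4: "(((u + v) mod m + w) mod m + z) mod m = ((u + w) + (v + z)) mod (m::nat)"
  by (simp add: mod_add_left_eq mod_add_right_eq add_ac)

lemma mod2: "((n * a) mod m + a) mod m = (Suc n * a) mod (m::nat)"
  by (simp add: mod_add_left_eq mod_add_right_eq add_ac)

lemma core:
  fixes G :: "('a, 'b) monoid_scheme" (structure) and p :: nat and x :: 'a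
  assumes pr: "prime p" and free: "free_pro_p_on p G T S \<iota>"
    and subH: "subgroup H G" and clH: "closedin T H"
    and xH: "x \<in> H" and xp: "x [^] p \<in> T closure_of (derived G H)"
    and maxM: "maximal_open_subgroup G T H M"
  shows "x \<in> M"
proof (rule ccontr)
  assume xM: "x \<notin> M"
  have pp: "pro_p_group p G T" using free unfolding free_pro_p_on_def by blast
  have prof: "profinite_group G T" using pp unfolding pro_p_group_def by blast
  have tg: "topological_group G T" using prof unfolding profinite_group_def by blast
  have grpG: "group G" and top: "topspace T = carrier G" using tg unfolding topological_group_def by auto
  interpret group G by (rule grpG)
  have nbhd: "\<forall>W. openin T W \<and> \<one> \<in> W \<longrightarrow> (\<exists>N. N \<lhd> G \<and> openin T N \<and> N \<subseteq> W)"
    using prof unfolding profinite_group_def by blast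
  have idx: "\<forall>N. N \<lhd> G \<and> openin T N \<longrightarrow> (\<exists>k. card (rcosets N) = p ^ k)"
    using pp unfolding pro_p_group_def by blast
  have subM: "subgroup M G" and MH: "M \<subset> H" and opM: "openin (subtopology T H) M"
    and maxL: "\<forall>L. subgroup L G \<and> M \<subseteq> L \<and> L \<subseteq> H \<longrightarrow> L = M \<or> L = H"
    using maxM unfolding maximal_open_subgroup_def by blast+
  have Hsub: "H \<subseteq> carrier G" using subH subgroup.subset by blast
  have p1: "p > 1" using pr prime_gt_1_nat by blast
  have xc: "x \<in> carrier G" using xH Hsub by blast
  obtain W where W: "openin T W" "M = W \<inter> H" using opM[unfolded openin_subtopology] by blast
  have oneM: "\<one> \<in> M" using subgroup.one_closed[OF subM] .
  have oneW: "\<one> \<in> W" using oneM W(2) by blast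
  have "\<exists>N. N \<lhd> G \<and> openin T N \<and> N \<subseteq> W" using nbhd W(1) oneW by blast
  then obtain N where N: "N \<lhd> G" "openin T N" "N \<subseteq> W" by blast
  have HN: "H \<inter> N \<subseteq> M" using N W by blast
  obtain k where k: "card (rcosets N) = p ^ k" using idx N by blast
  have subN: "subgroup N G" using normal_imp_subgroup[OF N(1)] .
  interpret nN: normal N G by (rule N(1))
  define Q where "Q = G Mod N"
  have grpQ: "group Q" unfolding Q_def using nN.factorgroup_is_group .
  have carQ: "carrier Q = rcosets N" unfolding Q_def by (simp add: FactGroup_def)
  have cardQ: "card (carrier Q) = p ^ k" using carQ k by simp
  have finQ: "finite (carrier Q)" using cardQ p1 card_gt_0_iff by fastforce
  define \<pi> where "\<pi> g = N #> g" for g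
  have \<pi>hom: "\<pi> \<in> hom G Q" unfolding \<pi>_def Q_def using nN.r_coset_hom_Mod .
  interpret \<pi>G: group_hom G Q \<pi> using grpG grpQ \<pi>hom by (simp add: group_hom_def group_hom_axioms_def)
  define Ub where "Ub = \<pi> ` H"
  define Mb where "Mb = \<pi> ` M"
  have subUb: "subgroup Ub Q" unfolding Ub_def using \<pi>G.subgroup_img_is_subgroup[OF subH] .
  have subMb: "subgroup Mb Q" unfolding Mb_def using \<pi>G.subgroup_img_is_subgroup[OF subM] .
  have MbUb: "Mb \<subseteq> Ub" unfolding Mb_def Ub_def using MH by blast
  define P where "P = Q\<lparr>carrier := Ub\<rparr>"
  have grpP: "group P" unfolding P_def using group.subgroup_imp_group[OF grpQ subUb] .
  have UbQ: "Ub \<subseteq> carrier Q" using subUb subgroup.subset by blast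
  have finP: "finite (carrier P)" unfolding P_def using finQ UbQ finite_subset by auto
  obtain j where cardP: "card (carrier P) = p ^ j"
  proof -
    have "card (rcosets\<^bsub>Q\<^esub> Ub) * card Ub = order Q" using group.lagrange[OF grpQ subUb] .
    hence "card Ub dvd p ^ k" using cardQ unfolding order_def by (metis dvd_triv_right)
    then obtain j where "card Ub = p ^ j" using divides_primepow_nat[OF pr] by blast
    thus ?thesis using that unfolding P_def by simp
  qed
  have subMbP: "subgroup Mb P" unfolding P_def using group.subgroup_incl[OF grpQ subMb subUb MbUb] .
  have maxP: "L = Mb \<or> L = carrier P" if L: "subgroup L P" and MbL: "Mb \<subseteq> L" for L
  proof -
    have LQ: "subgroup L Q" using group.incl_subgroup[OF grpQ subUb] L unfolding P_def by blast
    have LUb: "L \<subseteq> Ub" using L subgroup.subset unfolding P_def by fastforce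
    define L' where "L' = {h \<in> H. \<pi> h \<in> L}"
    have subL': "subgroup L' G"
    proof (rule subgroupI)
      show "L' \<subseteq> carrier G" unfolding L'_def using Hsub by blast
      show "L' \<noteq> {}"
      proof -
        have "\<one> \<in> L'" unfolding L'_def using subgroup.one_closed[OF subH] subgroup.one_closed[OF LQ] by simp
        thus ?thesis by blast
      qed
      show "inv a \<in> L'" if a: "a \<in> L'" for a
      proof -
        have aH: "a \<in> H" and aL: "\<pi> a \<in> L" using a unfolding L'_def by auto
        have ac: "a \<in> carrier G" using aH Hsub by blast
        have "\<pi> (inv a) = inv\<^bsub>Q\<^esub> (\<pi> a)" using \<pi>G.hom_inv[OF ac] .
        thus ?thesis unfolding L'_def using subgroup.m_inv_closed[OF subH aH] subgroup.m_inv_closed[OF LQ aL] by simp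
      qed
      show "a \<otimes> b \<in> L'" if a: "a \<in> L'" and b: "b \<in> L'" for a b
      proof -
        have aH: "a \<in> H" and aL: "\<pi> a \<in> L" and bH: "b \<in> H" and bL: "\<pi> b \<in> L" using a b unfolding L'_def by auto
        have ac: "a \<in> carrier G" and bc: "b \<in> carrier G" using aH bH Hsub by auto
        have "\<pi> (a \<otimes> b) = \<pi> a \<otimes>\<^bsub>Q\<^esub> \<pi> b" using \<pi>G.hom_mult[OF ac bc] .
        thus ?thesis unfolding L'_def using subgroup.m_closed[OF subH aH bH] subgroup.m_closed[OF LQ aL bL] by simp
      qed
    qed
    have hML': "M \<subseteq> L'" unfolding L'_def using MH MbL unfolding Mb_def by blast
    have L'H: "L' \<subseteq> H" unfolding L'_def by blast
    have "L' = M \<or> L' = H" using maxL subL' hML' L'H by blast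
    thus ?thesis
    proof
      assume e: "L' = M"
      have "L \<subseteq> Mb"
      proof
        fix l assume l: "l \<in> L"
        then obtain h where h: "h \<in> H" "l = \<pi> h" using LUb unfolding Ub_def by blast
        hence "h \<in> L'" unfolding L'_def using l by blast
        thus "l \<in> Mb" unfolding Mb_def using e h by blast
      qed
      thus ?thesis using MbL by blast
    next
      assume e: "L' = H"
      have "Ub \<subseteq> L" unfolding Ub_def using e unfolding L'_def by blast
      thus ?thesis using LUb unfolding P_def by simp
    qed
  qed
  have yP: "\<pi> x \<in> carrier P" unfolding P_def Ub_def using xH by simp
  have yMb: "\<pi> x \<notin> Mb"
  proof
    assume "\<pi> x \<in> Mb"
    then obtain m where m: "m \<in> M" "\<pi> x = \<pi> m" unfolding Mb_def by blast
    have mc: "m \<in> carrier G" using m MH Hsub by blast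
    have mH: "m \<in> H" using m MH by blast
    have "x \<in> N #> m" using m rcos_self[OF xc subN] unfolding \<pi>_def by simp
    hence xmN: "x \<otimes> inv m \<in> N" using subgroup.rcos_module_imp[OF subN grpG mc] by blast
    have "x \<otimes> inv m \<in> H" using subgroup.m_closed[OF subH xH subgroup.m_inv_closed[OF subH mH]] .
    hence "x \<otimes> inv m \<in> M" using xmN HN by blast
    hence "(x \<otimes> inv m) \<otimes> m \<in> M" using subgroup.m_closed[OF subM _ m(1)] by blast
    moreover have "(x \<otimes> inv m) \<otimes> m = x" using xc mc by (simp add: m_assoc)
    ultimately show False using xM by simp
  qed
  obtain ch where chlt: "\<forall>a\<in>carrier P. ch a < p"
    and chhom: "\<forall>a\<in>carrier P. \<forall>b\<in>carrier P. ch (a \<otimes>\<^bsub>P\<^esub> b) = (ch a + ch b) mod p"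
    and chy: "ch (\<pi> x) \<noteq> 0"
    using pgroup_max_char[OF grpP finP cardP pr subMbP maxP yP yMb] by blast
  have chlt': "\<forall>a\<in>Ub. ch a < p" using chlt unfolding P_def by simp
  have chhom': "\<forall>a\<in>Ub. \<forall>b\<in>Ub. ch (a \<otimes>\<^bsub>Q\<^esub> b) = (ch a + ch b) mod p" using chhom unfolding P_def by simp
  have p0: "p > 0" using p1 by simp
  define Ew where "Ew = wr (p * p) Q Ub"
  define Eb where "Eb = wr p Q Ub"
  have grpEw: "group Ew" unfolding Ew_def using wr_group[OF grpQ subUb] p0 by simp
  have grpEb: "group Eb" unfolding Eb_def using wr_group[OF grpQ subUb p0] .
  have finEw: "finite (carrier Ew)" unfolding Ew_def using wr_card(2)[OF grpQ subUb finQ] .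
  have cardEw: "card (carrier Ew) = p ^ (2 * card (rcosets\<^bsub>Q\<^esub> Ub) + k)"
    unfolding Ew_def using wr_card(1)[OF grpQ subUb finQ] cardQ
    by (simp add: power_add power_mult_distrib power_mult[symmetric] mult_2)
  define red where "red = wred p Q Ub"
  have redhom: "red \<in> hom Ew Eb" unfolding red_def Ew_def Eb_def using wred_hom[OF grpQ subUb p0] .
  have redsurj: "\<forall>y\<in>carrier Eb. \<exists>x\<in>carrier Ew. red x = y"
    unfolding red_def Ew_def Eb_def using wred_surj by blast
  define th where "th g = wTheta Q Ub ch (\<pi> g)" for g
  have Thhom: "wTheta Q Ub ch \<in> hom Q Eb" unfolding Eb_def using wTheta_hom[OF grpQ subUb p0 chlt' chhom'] .
  have thhom: "th \<in> hom G Eb"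
  proof (rule homI)
    fix g assume "g \<in> carrier G" thus "th g \<in> carrier Eb" unfolding th_def using hom_in_carrier[OF Thhom] by simp
  next
    fix g h assume g: "g \<in> carrier G" and h: "h \<in> carrier G"
    show "th (g \<otimes> h) = th g \<otimes>\<^bsub>Eb\<^esub> th h" unfolding th_def using \<pi>G.hom_mult[OF g h]
      hom_mult[OF Thhom] g h by simp
  qed
  have thopen: "\<forall>y. openin T {g \<in> carrier G. th g = y}"
    unfolding th_def \<pi>_def using coset_fun_open[OF tg N(2) subN, of "wTheta Q Ub ch"] by blast
  obtain \<Theta> where \<Theta>hom: "\<Theta> \<in> hom G Ew" and \<Theta>open: "\<forall>y. openin T {g \<in> carrier G. \<Theta> g = y}"
    and \<Theta>red: "\<forall>g\<in>carrier G. red (\<Theta> g) = th g"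
    using free_lift[OF free pr grpEw finEw cardEw grpEb redhom redsurj thhom thopen] by blast
  interpret \<Theta>G: group_hom G Ew \<Theta> using grpG grpEw \<Theta>hom by (simp add: group_hom_def group_hom_axioms_def)
  have UbR: "Ub \<in> rcosets\<^bsub>Q\<^esub> Ub" using rcosets_self[OF grpQ subUb] .
  define \<psi> where "\<psi> g = fst (\<Theta> g) Ub" for g
  have snd\<Theta>: "snd (\<Theta> g) = \<pi> g" if g: "g \<in> carrier G" for g
  proof -
    have "snd (red (\<Theta> g)) = snd (\<Theta> g)" unfolding red_def wred_def by simp
    moreover have "snd (th g) = \<pi> g" unfolding th_def wTheta_def by simp
    ultimately show ?thesis using \<Theta>red g by metis
  qed
  have \<psi>lt: "\<psi> g < p * p" if g: "g \<in> carrier G" for g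
  proof -
    have "\<Theta> g \<in> carrier Ew" using g by simp
    thus ?thesis unfolding \<psi>_def Ew_def wr_carrier using UbR by (auto simp: PiE_iff)
  qed
  have \<psi>mult: "\<psi> (a \<otimes> b) = (\<psi> a + \<psi> b) mod (p * p)" if a: "a \<in> H" and b: "b \<in> carrier G" for a b
  proof -
    have ac: "a \<in> carrier G" using a Hsub by blast
    have "\<Theta> (a \<otimes> b) = \<Theta> a \<otimes>\<^bsub>Ew\<^esub> \<Theta> b" using \<Theta>G.hom_mult[OF ac b] .
    moreover have "snd (\<Theta> a) \<in> Ub" using snd\<Theta>[OF ac] a unfolding Ub_def by simp
    moreover have "\<Theta> a \<in> carrier Ew" using ac by simp
    ultimately show ?thesis unfolding \<psi>_def Ew_def using wr_base_mult[OF grpQ subUb] by simp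
  qed
  have \<psi>one: "\<psi> \<one> = 0"
  proof -
    have "\<Theta> \<one> = \<one>\<^bsub>Ew\<^esub>" by simp
    thus ?thesis unfolding \<psi>_def Ew_def wr_one using UbR by simp
  qed
  have \<psi>inv: "(\<psi> a + \<psi> (inv a)) mod (p * p) = 0" if a: "a \<in> H" for a
  proof -
    have ac: "a \<in> carrier G" using a Hsub by blast
    have "\<psi> (a \<otimes> inv a) = (\<psi> a + \<psi> (inv a)) mod (p * p)" using \<psi>mult[OF a inv_closed[OF ac]] ac by simp
    thus ?thesis using \<psi>one ac by simp
  qed
  define Z where "Z = {g \<in> H. \<psi> g = 0}"
  have derZ: "derived G H \<subseteq> Z"
  proof
    fix z assume "z \<in> derived G H"
    thus "z \<in> Z" unfolding derived_def
    proof (induction rule: generate.induct)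
      case one thus ?case unfolding Z_def using subgroup.one_closed[OF subH] \<psi>one by simp
    next
      case (incl h)
      then obtain a b where ab: "a \<in> H" "b \<in> H" "h = a \<otimes> b \<otimes> inv a \<otimes> inv b" by blast
      have ac: "a \<in> carrier G" and bc: "b \<in> carrier G" using ab Hsub by auto
      have iaH: "inv a \<in> H" and ibH: "inv b \<in> H" using subgroup.m_inv_closed[OF subH] ab by auto
      have abH: "a \<otimes> b \<in> H" using subgroup.m_closed[OF subH ab(1) ab(2)] .
      have abaH: "a \<otimes> b \<otimes> inv a \<in> H" using subgroup.m_closed[OF subH abH iaH] .
      have hH: "h \<in> H" using subgroup.m_closed[OF subH abaH ibH] ab(3) by simp
      have "\<psi> h = (((\<psi> a + \<psi> b) mod (p * p) + \<psi> (inv a)) mod (p * p) + \<psi> (inv b)) mod (p * p)"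
        using ab(3) \<psi>mult[OF abaH] \<psi>mult[OF abH] \<psi>mult[OF ab(1)] ac bc by simp
      also have "\<dots> = ((\<psi> a + \<psi> (inv a)) + (\<psi> b + \<psi> (inv b))) mod (p * p)"
        by (rule mod4)
      also have "\<dots> = ((\<psi> a + \<psi> (inv a)) mod (p * p) + (\<psi> b + \<psi> (inv b)) mod (p * p)) mod (p * p)"
        by (simp add: mod_add_eq)
      also have "\<dots> = 0" using \<psi>inv ab by simp
      finally show ?case unfolding Z_def using hH by simp
    next
      case (inv h)
      then obtain a b where ab: "a \<in> H" "b \<in> H" "h = a \<otimes> b \<otimes> inv a \<otimes> inv b" by blast
      have iaH: "inv a \<in> H" and ibH: "inv b \<in> H" using subgroup.m_inv_closed[OF subH] ab by auto
      have abH: "a \<otimes> b \<in> H" using subgroup.m_closed[OF subH ab(1) ab(2)] .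
      have abaH: "a \<otimes> b \<otimes> inv a \<in> H" using subgroup.m_closed[OF subH abH iaH] .
      have hH: "h \<in> H" using subgroup.m_closed[OF subH abaH ibH] ab(3) by simp
      have ac: "a \<in> carrier G" and bc: "b \<in> carrier G" using ab Hsub by auto
      have "inv h = b \<otimes> a \<otimes> inv b \<otimes> inv a" using ab(3) ac bc by (simp add: inv_mult_group m_assoc)
      moreover have "\<psi> (b \<otimes> a \<otimes> inv b \<otimes> inv a) = 0"
      proof -
        have baH: "b \<otimes> a \<in> H" using subgroup.m_closed[OF subH ab(2) ab(1)] .
        have babH: "b \<otimes> a \<otimes> inv b \<in> H" using subgroup.m_closed[OF subH baH ibH] .
        have "\<psi> (b \<otimes> a \<otimes> inv b \<otimes> inv a) = (((\<psi> b + \<psi> a) mod (p * p) + \<psi> (inv b)) mod (p * p) + \<psi> (inv a)) mod (p * p)"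
          using \<psi>mult[OF babH] \<psi>mult[OF baH] \<psi>mult[OF ab(2)] ac bc by simp
        also have "\<dots> = ((\<psi> b + \<psi> (inv b)) + (\<psi> a + \<psi> (inv a))) mod (p * p)"
          by (rule mod4)
        also have "\<dots> = ((\<psi> b + \<psi> (inv b)) mod (p * p) + (\<psi> a + \<psi> (inv a)) mod (p * p)) mod (p * p)"
          by (simp add: mod_add_eq)
        also have "\<dots> = 0" using \<psi>inv ab by simp
        finally show ?thesis .
      qed
      moreover have "inv h \<in> H" using subgroup.m_inv_closed[OF subH hH] .
      ultimately show ?case unfolding Z_def by simp
    next
      case (eng h1 h2)
      hence h: "h1 \<in> H" "h2 \<in> H" "\<psi> h1 = 0" "\<psi> h2 = 0" unfolding Z_def by auto
      have "\<psi> (h1 \<otimes> h2) = 0" using \<psi>mult[OF h(1)] h Hsub by auto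
      thus ?case unfolding Z_def using subgroup.m_closed[OF subH h(1) h(2)] by simp
    qed
  qed
  have clZ: "closedin T Z"
  proof -
    have "closedin T {g \<in> carrier G. fst (\<Theta> g) Ub = 0}"
      using fiber_pred_closed[OF top[symmetric] \<Theta>open, of "\<lambda>e. fst e Ub = 0"] by simp
    hence "closedin T (H \<inter> {g \<in> carrier G. fst (\<Theta> g) Ub = 0})" using clH by blast
    moreover have "Z = H \<inter> {g \<in> carrier G. fst (\<Theta> g) Ub = 0}" unfolding Z_def \<psi>_def using Hsub by blast
    ultimately show ?thesis by simp
  qed
  have "T closure_of (derived G H) \<subseteq> Z" using closure_of_minimal[OF derZ clZ] .
  hence psixp: "\<psi> (x [^] p) = 0" using xp unfolding Z_def by blast
  have powpsi: "x [^] n \<in> H \<and> \<psi> (x [^] n) = (n * \<psi> x) mod (p * p)" for n :: nat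
  proof (induction n)
    case 0 thus ?case using subgroup.one_closed[OF subH] \<psi>one by simp
  next
    case (Suc n)
    hence xnH: "x [^] n \<in> H" and e: "\<psi> (x [^] n) = (n * \<psi> x) mod (p * p)" by auto
    have "x [^] Suc n = x [^] n \<otimes> x" by simp
    hence "\<psi> (x [^] Suc n) = ((n * \<psi> x) mod (p * p) + \<psi> x) mod (p * p)" using \<psi>mult[OF xnH xc] e by simp
    also have "\<dots> = (Suc n * \<psi> x) mod (p * p)" by (rule mod2)
    finally show ?case using subgroup.m_closed[OF subH xnH xH] by simp
  qed
  have "(p * \<psi> x) mod (p * p) = 0" using powpsi[of p] psixp by simp
  hence "p * p dvd p * \<psi> x" by (simp add: mod_eq_0_iff_dvd)
  hence "p dvd \<psi> x" using p0 by simp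
  hence psimod: "\<psi> x mod p = 0" by simp
  have "\<psi> x mod p = fst (red (\<Theta> x)) Ub" unfolding red_def wred_def \<psi>_def using UbR by simp
  also have "\<dots> = fst (th x) Ub" using \<Theta>red xc by simp
  also have "\<dots> = ch (\<pi> x)" unfolding th_def using wTheta_base[OF grpQ subUb] xH unfolding Ub_def by simp
  finally show False using psimod chy by simp
qed

theorem mainTheorem17:
  fixes p :: nat and G :: "('a, 'b) monoid_scheme" and T :: "'a topology"
  assumes "prime p"
    and "free_pro_p_group p G T"
  shows "strongly_commutator_resistant p G T"
proof -
  obtain S :: "'a set" and \<iota> :: "'a \<Rightarrow> 'a" where free: "free_pro_p_on p G T S \<iota>" using assms(2) unfolding free_pro_p_group_def by blast
  show ?thesis
    unfolding strongly_commutator_resistant_def hierarchical_def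
  proof (intro allI impI ballI)
    fix H x assume cs: "closed_subgroup G T H" and xH: "x \<in> H"
      and xp: "x [^]\<^bsub>G\<^esub> p \<in> closed_commutator G T H"
    have subH: "subgroup H G" and clH: "closedin T H" using cs unfolding closed_subgroup_def by auto
    show "x \<in> frattini G T H"
      unfolding frattini_def
      using core[OF assms(1) free subH clH xH] xp xH unfolding closed_commutator_def by blast
  qed
qed


end
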